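(* For every $g\in\mathbb R$ and all $\eta,\zeta\in\mathcal F^{\mathcal S}$, \[ \ell_{\mathrm C,\infty}(\mathcal T_g\eta,\mathcal T_g\zeta)\le\ell_{\mathrm C,\infty}(\eta,\zeta). \]
   Context: Finite state set $\mathcal S=\{1,\dots,m\}$ and transition matrix $P=(P_{ij})$ on $\mathcal S$ (induced by a fixed policy in a finite MDP). $R_{ij}$ is the finite-valued $[0,1]$-valued random one-step reward conditioned on transition $i\to j$; for $g\in\mathbb R$, $\nu^{(g)}_{ij}:=\mathrm{Law}(R_{ij}-g)$. $\mathcal F^{\mathcal S}$ is the set of families $\eta=(\eta_i)_{i\in\mathcal S}$ of probability laws on $\mathbb R$ with finite second moment, and $(\mathcal T_g\eta)_i:=\sum_jP_{ij}(\nu^{(g)}_{ij}\ast\eta_j)$. Cramér distance $\ell_{\mathrm C}(\eta,\zeta):=(\int_{\mathbb R}(F_\eta-F_\zeta)^2\,\mathrm dx)^{1/2}$ with $F$ the cdfs, and $\ell_{\mathrm C,\infty}(\eta,\zeta):=\max_i\ell_{\mathrm C}(\eta_i,\zeta_i)$. *)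

theory Defs
  imports "HOL-Probability.Probability"
begin

definition law2 :: "real measure \<Rightarrow> bool" where
  "law2 M \<longleftrightarrow> prob_space M \<and> sets M = sets borel \<and> integrable M (\<lambda>x. x\<^sup>2)"

definition cramer :: "real measure \<Rightarrow> real measure \<Rightarrow> real" where
  "cramer M N = sqrt (\<integral>x. (cdf M x - cdf N x)\<^sup>2 \<partial>lborel)"

definition cramer_inf :: "('s::finite \<Rightarrow> real measure) \<Rightarrow> ('s \<Rightarrow> real measure) \<Rightarrow> real" where
  "cramer_inf \<eta> \<zeta> = Max (range (\<lambda>i. cramer (\<eta> i) (\<zeta> i)))"

definition nu :: "('s \<Rightarrow> 's \<Rightarrow> real pmf) \<Rightarrow> real \<Rightarrow> 's \<Rightarrow> 's \<Rightarrow> real measure" where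
  "nu R g i j = measure_pmf (map_pmf (\<lambda>r. r - g) (R i j))"

text \<open>Distributional Bellman operator: (T_g eta)_i = sum_j P_ij (nu_ij * eta_j).\<close>
definition bellman ::
  "('s::finite \<Rightarrow> 's \<Rightarrow> real) \<Rightarrow> ('s \<Rightarrow> 's \<Rightarrow> real pmf) \<Rightarrow> real
     \<Rightarrow> ('s \<Rightarrow> real measure) \<Rightarrow> 's \<Rightarrow> real measure" where
  "bellman P R g \<eta> i = measure_of UNIV (sets borel)
     (\<lambda>A. \<Sum>j\<in>UNIV. ennreal (P i j) * emeasure (nu R g i j \<star> \<eta> j) A)"

end

theory Submission imports Defs begin

lemma jensen_sq:
  fixes w a :: "'i \<Rightarrow> real"
  assumes "finite I" "\<And>i. i \<in> I \<Longrightarrow> w i \<ge> 0" "sum w I = 1"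
  shows "(\<Sum>i\<in>I. w i * a i)^2 \<le> (\<Sum>i\<in>I. w i * (a i)^2)"
proof -
  define m where "m = (\<Sum>i\<in>I. w i * a i)"
  have "0 \<le> (\<Sum>i\<in>I. w i * (a i - m)^2)"
    using assms by (intro sum_nonneg) auto
  also have "\<dots> = (\<Sum>i\<in>I. w i * (a i)^2) - 2 * m * (\<Sum>i\<in>I. w i * a i) + m^2 * sum w I"
    by (simp add: power2_diff algebra_simps sum.distrib sum_subtractf sum_distrib_left sum_distrib_right)
  also have "\<dots> = (\<Sum>i\<in>I. w i * (a i)^2) - m^2"
    using assms(3) by (simp add: m_def power2_eq_square)
  finally show ?thesis by (simp add: m_def)
qed

lemma integral_jensen:
  fixes w :: "'i \<Rightarrow> real" and f :: "'i \<Rightarrow> real \<Rightarrow> real"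
  assumes "finite I" "\<And>i. i \<in> I \<Longrightarrow> w i \<ge> 0" "sum w I = 1"
    and meas: "\<And>i. i \<in> I \<Longrightarrow> f i \<in> borel_measurable lborel"
    and int: "\<And>i. i \<in> I \<Longrightarrow> integrable lborel (\<lambda>x. (f i x)^2)"
  shows "integrable lborel (\<lambda>x. (\<Sum>i\<in>I. w i * f i x)^2)"
    and "(\<integral>x. (\<Sum>i\<in>I. w i * f i x)^2 \<partial>lborel) \<le> (\<Sum>i\<in>I. w i * (\<integral>x. (f i x)^2 \<partial>lborel))"
proof -
  have i2: "integrable lborel (\<lambda>x. \<Sum>i\<in>I. w i * (f i x)^2)"
    using int by (intro Bochner_Integration.integrable_sum Bochner_Integration.integrable_mult_right) auto
  have m: "(\<lambda>x. (\<Sum>i\<in>I. w i * f i x)^2) \<in> borel_measurable lborel"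
    using meas by measurable
  have le: "(\<Sum>i\<in>I. w i * f i x)^2 \<le> (\<Sum>i\<in>I. w i * (f i x)^2)" for x
    by (rule jensen_sq) (use assms in auto)
  show i1: "integrable lborel (\<lambda>x. (\<Sum>i\<in>I. w i * f i x)^2)"
    by (rule Bochner_Integration.integrable_bound[OF i2 m]) (auto intro!: AE_I2 order.trans[OF le])
  have "(\<integral>x. (\<Sum>i\<in>I. w i * f i x)^2 \<partial>lborel) \<le> (\<integral>x. (\<Sum>i\<in>I. w i * (f i x)^2) \<partial>lborel)"
    by (rule integral_mono[OF i1 i2 le])
  also have "\<dots> = (\<Sum>i\<in>I. w i * (\<integral>x. (f i x)^2 \<partial>lborel))"
    using int by (subst Bochner_Integration.integral_sum) (auto intro!: Bochner_Integration.integrable_mult_right)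
  finally show "(\<integral>x. (\<Sum>i\<in>I. w i * f i x)^2 \<partial>lborel) \<le> (\<Sum>i\<in>I. w i * (\<integral>x. (f i x)^2 \<partial>lborel))" .
qed


lemma conv_pmf_emeasure:
  fixes Q :: "real pmf" and M :: "real measure"
  assumes "prob_space M" and sM: "sets M = sets borel" and A: "A \<in> sets borel"
  shows "emeasure (measure_pmf Q \<star> M) A = (\<integral>\<^sup>+r. emeasure M {y. r + y \<in> A} \<partial>measure_pmf Q)"
proof -
  interpret M: prob_space M by fact
  have spM: "space M = UNIV" using sets_eq_imp_space_eq[OF sM] by simp
  have meas: "(\<lambda>(x, y). x + y) \<in> measurable (measure_pmf Q \<Otimes>\<^sub>M M) borel"
  proof -
    have f: "fst \<in> borel_measurable (measure_pmf Q \<Otimes>\<^sub>M M)"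
    proof (rule measurable_compose[OF measurable_fst])
      show "(\<lambda>x. x) \<in> borel_measurable (measure_pmf Q)"
        by (subst measurable_cong_sets[OF sets_measure_pmf_count_space refl]) simp
    qed
    have s: "snd \<in> borel_measurable (measure_pmf Q \<Otimes>\<^sub>M M)"
    proof (rule measurable_compose[OF measurable_snd])
      show "(\<lambda>x. x) \<in> borel_measurable M"
        by (subst measurable_cong_sets[OF sM refl]) simp
    qed
    have "(\<lambda>z. fst z + snd z) \<in> borel_measurable (measure_pmf Q \<Otimes>\<^sub>M M)"
      using f s by (rule borel_measurable_add)
    then show ?thesis by (simp add: case_prod_beta')
  qed
  have X: "(\<lambda>(x, y). x + y) -` A \<inter> space (measure_pmf Q \<Otimes>\<^sub>M M) \<in> sets (measure_pmf Q \<Otimes>\<^sub>M M)"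
    using meas A by (rule measurable_sets)
  have "emeasure (measure_pmf Q \<star> M) A = emeasure (measure_pmf Q \<Otimes>\<^sub>M M) ((\<lambda>(x, y). x + y) -` A \<inter> space (measure_pmf Q \<Otimes>\<^sub>M M))"
    unfolding convolution_def using meas A by (simp add: emeasure_distr)
  also have "\<dots> = (\<integral>\<^sup>+r. emeasure M (Pair r -` ((\<lambda>(x, y). x + y) -` A \<inter> space (measure_pmf Q \<Otimes>\<^sub>M M))) \<partial>measure_pmf Q)"
    by (rule M.emeasure_pair_measure_alt[OF X])
  also have "\<dots> = (\<integral>\<^sup>+r. emeasure M {y. r + y \<in> A} \<partial>measure_pmf Q)"
    by (intro nn_integral_cong arg_cong2[where f=emeasure]) (auto simp: space_pair_measure spM)
  finally show ?thesis .
qed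

lemma conv_cdf_emeasure:
  fixes Q :: "real pmf" and M :: "real measure"
  assumes "prob_space M" and sM: "sets M = sets borel" and fin: "finite (set_pmf Q)"
  shows "emeasure (measure_pmf (map_pmf h Q) \<star> M) {..x} = ennreal (\<Sum>r\<in>set_pmf Q. pmf Q r * cdf M (x - h r))"
proof -
  interpret M: prob_space M by fact
  have "emeasure (measure_pmf (map_pmf h Q) \<star> M) {..x} = (\<integral>\<^sup>+s. emeasure M {y. s + y \<in> {..x}} \<partial>measure_pmf (map_pmf h Q))"
    by (rule conv_pmf_emeasure[OF assms(1) sM]) simp
  also have "\<dots> = (\<integral>\<^sup>+r. emeasure M {y. h r + y \<in> {..x}} \<partial>measure_pmf Q)"
    by simp
  also have "\<dots> = (\<Sum>r\<in>set_pmf Q. emeasure M {y. h r + y \<in> {..x}} * pmf Q r)"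
    by (rule nn_integral_measure_pmf_finite[OF fin]) simp
  also have "\<dots> = (\<Sum>r\<in>set_pmf Q. ennreal (pmf Q r * cdf M (x - h r)))"
  proof (intro sum.cong refl)
    fix r
    have "{y. h r + y \<in> {..x}} = {..x - h r}" by auto
    then have "emeasure M {y. h r + y \<in> {..x}} = ennreal (cdf M (x - h r))"
      using sM by (simp add: cdf_def M.emeasure_eq_measure)
    then show "emeasure M {y. h r + y \<in> {..x}} * pmf Q r = ennreal (pmf Q r * cdf M (x - h r))"
      by (simp add: ennreal_mult'' mult.commute cdf_def)
  qed
  also have "\<dots> = ennreal (\<Sum>r\<in>set_pmf Q. pmf Q r * cdf M (x - h r))"
    by (rule sum_ennreal) (simp add: cdf_def)
  finally show ?thesis .
qed

lemma bellman_emeasure: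
  assumes A: "A \<in> sets borel"
  shows "emeasure (bellman P R g \<eta> i) A = (\<Sum>j\<in>UNIV. ennreal (P i j) * emeasure (nu R g i j \<star> \<eta> j) A)"
  unfolding bellman_def
proof (rule emeasure_measure_of_sigma[OF _ _ _ A])
  show "sigma_algebra UNIV (sets borel)"
    using sets.sigma_algebra_axioms[of borel] by simp
  show "positive (sets borel) (\<lambda>A. \<Sum>j\<in>UNIV. ennreal (P i j) * emeasure (nu R g i j \<star> \<eta> j) A)"
    by (simp add: positive_def)
  show "countably_additive (sets borel) (\<lambda>A. \<Sum>j\<in>UNIV. ennreal (P i j) * emeasure (nu R g i j \<star> \<eta> j) A)"
  proof (rule countably_additiveI)
    fix F :: "nat \<Rightarrow> real set"
    assume F: "range F \<subseteq> sets borel" "disjoint_family F" "\<Union> (range F) \<in> sets borel"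
    have "(\<Sum>n. \<Sum>j\<in>UNIV. ennreal (P i j) * emeasure (nu R g i j \<star> \<eta> j) (F n))
        = (\<Sum>j\<in>UNIV. \<Sum>n. ennreal (P i j) * emeasure (nu R g i j \<star> \<eta> j) (F n))"
      by (rule suminf_sum) (rule summableI)
    also have "\<dots> = (\<Sum>j\<in>UNIV. ennreal (P i j) * emeasure (nu R g i j \<star> \<eta> j) (\<Union> (range F)))"
    proof (intro sum.cong refl)
      fix j
      show "(\<Sum>n. ennreal (P i j) * emeasure (nu R g i j \<star> \<eta> j) (F n)) = ennreal (P i j) * emeasure (nu R g i j \<star> \<eta> j) (\<Union> (range F))"
        using F by (simp add: suminf_emeasure)
    qed
    finally show "(\<Sum>n. \<Sum>j\<in>UNIV. ennreal (P i j) * emeasure (nu R g i j \<star> \<eta> j) (F n))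
        = (\<Sum>j\<in>UNIV. ennreal (P i j) * emeasure (nu R g i j \<star> \<eta> j) (\<Union> (range F)))" .
  qed
qed

lemma bellman_cdf:
  fixes P :: "'s::finite \<Rightarrow> 's \<Rightarrow> real"
  assumes Pn: "\<And>i j. P i j \<ge> 0"
    and fin: "\<And>i j. finite (set_pmf (R i j))"
    and pr: "\<And>j. prob_space (\<eta> j)" and sets: "\<And>j. sets (\<eta> j) = sets borel"
  shows "cdf (bellman P R g \<eta> i) x = (\<Sum>j\<in>UNIV. P i j * (\<Sum>r\<in>set_pmf (R i j). pmf (R i j) r * cdf (\<eta> j) (x - (r - g))))"
proof -
  have "emeasure (bellman P R g \<eta> i) {..x} = (\<Sum>j\<in>UNIV. ennreal (P i j) * emeasure (nu R g i j \<star> \<eta> j) {..x})"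
    by (rule bellman_emeasure) simp
  also have "\<dots> = (\<Sum>j\<in>UNIV. ennreal (P i j * (\<Sum>r\<in>set_pmf (R i j). pmf (R i j) r * cdf (\<eta> j) (x - (r - g)))))"
  proof (intro sum.cong refl)
    fix j
    have "emeasure (nu R g i j \<star> \<eta> j) {..x} = ennreal (\<Sum>r\<in>set_pmf (R i j). pmf (R i j) r * cdf (\<eta> j) (x - (r - g)))"
      unfolding nu_def by (rule conv_cdf_emeasure[OF pr sets fin])
    then show "ennreal (P i j) * emeasure (nu R g i j \<star> \<eta> j) {..x} = ennreal (P i j * (\<Sum>r\<in>set_pmf (R i j). pmf (R i j) r * cdf (\<eta> j) (x - (r - g))))"
      using Pn by (simp add: ennreal_mult sum_nonneg cdf_def)
  qed
  also have "\<dots> = ennreal (\<Sum>j\<in>UNIV. P i j * (\<Sum>r\<in>set_pmf (R i j). pmf (R i j) r * cdf (\<eta> j) (x - (r - g))))"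
    using Pn by (intro sum_ennreal) (simp add: sum_nonneg cdf_def)
  finally have e: "emeasure (bellman P R g \<eta> i) {..x} = ennreal (\<Sum>j\<in>UNIV. P i j * (\<Sum>r\<in>set_pmf (R i j). pmf (R i j) r * cdf (\<eta> j) (x - (r - g))))" .
  show ?thesis
    unfolding cdf_def measure_def e
    using Pn by (simp add: sum_nonneg cdf_def)
qed


lemma inv_sq_integrable: "integrable lborel (\<lambda>x::real. inverse (1 + x^2))"
  using integrable_inverse_1_plus_square by (simp add: set_integrable_def)

lemma tail_bound:
  assumes "law2 M"
  shows "measure M {y. x^2 \<le> y^2} \<le> (1 + (\<integral>y. y^2 \<partial>M)) * inverse (1 + x^2)"
proof -
  interpret M: prob_space M using assms by (simp add: law2_def)
  have sM: "sets M = sets borel" and int: "integrable M (\<lambda>y. y^2)" using assms by (auto simp: law2_def)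
  have spM: "space M = UNIV" using sets_eq_imp_space_eq[OF sM] by simp
  define a where "a = (\<integral>y. y^2 \<partial>M)"
  define t where "t = measure M {y. x^2 \<le> y^2}"
  have a0: "a \<ge> 0" unfolding a_def by (rule integral_nonneg_AE) simp
  have t1: "t \<le> 1" unfolding t_def by simp
  have t0: "t \<ge> 0" unfolding t_def by simp
  have xt: "x^2 * t \<le> a"
  proof (cases "x = 0")
    case True then show ?thesis using a0 by simp
  next
    case False
    then have xp: "x^2 > 0" by simp
    have "measure M {y\<in>space M. (\<lambda>y. y^2) y \<ge> x^2} \<le> (\<integral>y. y^2 \<partial>M) / x^2"
      by (rule integral_Markov_inequality_measure[OF int _ _ xp, of "{}"]) auto
    then have "t \<le> a / x^2" by (simp add: t_def a_def spM)
    then show ?thesis using xp by (simp add: field_simps)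
  qed
  have "(1 + x^2) * t \<le> 1 + a" using t1 xt by (simp add: algebra_simps)
  then have "t \<le> (1 + a) / (1 + x^2)"
    by (simp add: field_simps add_pos_nonneg)
  then show ?thesis by (simp add: t_def a_def divide_inverse)
qed

lemma cdf_mono_gen:
  assumes "law2 M"
  shows "mono (cdf M)"
proof
  interpret M: prob_space M using assms by (simp add: law2_def)
  have sM: "sets M = sets borel" using assms by (auto simp: law2_def)
  fix x y :: real assume "x \<le> y"
  then show "cdf M x \<le> cdf M y"
    unfolding cdf_def using sM by (intro M.finite_measure_mono) auto
qed

lemma cdf_diff_bound:
  assumes "law2 M"
  shows "(x < 0 \<longrightarrow> cdf M x \<le> measure M {y. x^2 \<le> y^2}) \<and>
         (x \<ge> 0 \<longrightarrow> 1 - cdf M x \<le> measure M {y. x^2 \<le> y^2}) \<and> 0 \<le> cdf M x \<and> cdf M x \<le> 1"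
proof -
  interpret M: prob_space M using assms by (simp add: law2_def)
  have sM: "sets M = sets borel" using assms by (auto simp: law2_def)
  have spM: "space M = UNIV" using sets_eq_imp_space_eq[OF sM] by simp
  have "measure M {..x} \<le> measure M {y. x^2 \<le> y^2}" if "x < 0"
  proof (rule M.finite_measure_mono)
    show "{..x} \<subseteq> {y. x^2 \<le> y^2}"
    proof
      fix y assume "y \<in> {..x}"
      then have "y \<le> x" by simp
      then have "-x \<le> -y" by simp
      then have "(-x)^2 \<le> (-y)^2" using that by (intro power_mono) auto
      then show "y \<in> {y. x^2 \<le> y^2}" by simp
    qed
  qed (use sM in simp)
  moreover have "1 - measure M {..x} \<le> measure M {y. x^2 \<le> y^2}" if "x \<ge> 0"
  proof -
    have "1 - measure M {..x} = measure M (space M - {..x})"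
      using sM by (subst M.prob_compl) auto
    also have "\<dots> \<le> measure M {y. x^2 \<le> y^2}"
    proof (rule M.finite_measure_mono)
      show "space M - {..x} \<subseteq> {y. x^2 \<le> y^2}"
      proof
        fix y assume "y \<in> space M - {..x}"
        then have "x \<le> y" by simp
        then have "x^2 \<le> y^2" using that by (intro power_mono) auto
        then show "y \<in> {y. x^2 \<le> y^2}" by simp
      qed
    qed (use sM in simp)
    finally show ?thesis .
  qed
  ultimately show ?thesis by (simp add: cdf_def)
qed

lemma cramer_sq_integrable:
  assumes M: "law2 M" and N: "law2 N"
  shows "integrable lborel (\<lambda>x. (cdf M x - cdf N x)^2)"
proof (rule Bochner_Integration.integrable_bound)
  define a where "a = (\<integral>y. y^2 \<partial>M)"
  define b where "b = (\<integral>y. y^2 \<partial>N)"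
  show "integrable lborel (\<lambda>x. (2 + a + b) * inverse (1 + x^2))"
    using inv_sq_integrable by (rule Bochner_Integration.integrable_mult_right)
  show "(\<lambda>x. (cdf M x - cdf N x)^2) \<in> borel_measurable lborel"
    using borel_measurable_mono[OF cdf_mono_gen[OF M]] borel_measurable_mono[OF cdf_mono_gen[OF N]]
    by measurable
  show "AE x in lborel. norm ((cdf M x - cdf N x)^2) \<le> norm ((2 + a + b) * inverse (1 + x^2))"
  proof (rule AE_I2)
    fix x :: real
    have bM: "measure M {y. x^2 \<le> y^2} \<le> (1 + a) * inverse (1 + x^2)"
      using tail_bound[OF M] by (simp add: a_def)
    have bN: "measure N {y. x^2 \<le> y^2} \<le> (1 + b) * inverse (1 + x^2)"
      using tail_bound[OF N] by (simp add: b_def)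
    have dM: "(x < 0 \<longrightarrow> cdf M x \<le> measure M {y. x^2 \<le> y^2}) \<and>
         (x \<ge> 0 \<longrightarrow> 1 - cdf M x \<le> measure M {y. x^2 \<le> y^2}) \<and> 0 \<le> cdf M x \<and> cdf M x \<le> 1"
      by (rule cdf_diff_bound[OF M])
    have dN: "(x < 0 \<longrightarrow> cdf N x \<le> measure N {y. x^2 \<le> y^2}) \<and>
         (x \<ge> 0 \<longrightarrow> 1 - cdf N x \<le> measure N {y. x^2 \<le> y^2}) \<and> 0 \<le> cdf N x \<and> cdf N x \<le> 1"
      by (rule cdf_diff_bound[OF N])
    have d: "\<bar>cdf M x - cdf N x\<bar> \<le> measure M {y. x^2 \<le> y^2} + measure N {y. x^2 \<le> y^2}"
      using dM dN by (cases "x < 0") auto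
    have d1: "\<bar>cdf M x - cdf N x\<bar> \<le> 1" using dM dN by auto
    have "(cdf M x - cdf N x)^2 = \<bar>cdf M x - cdf N x\<bar> * \<bar>cdf M x - cdf N x\<bar>"
      by (simp add: power2_eq_square abs_mult_self_eq)
    also have "\<dots> \<le> \<bar>cdf M x - cdf N x\<bar>"
      by (rule mult_left_le[OF d1 abs_ge_zero])
    also have "\<dots> \<le> (1 + a) * inverse (1 + x^2) + (1 + b) * inverse (1 + x^2)"
      using d bM bN by linarith
    also have "\<dots> \<le> (2 + a + b) * inverse (1 + x^2)"
      by (simp add: algebra_simps)
    finally have "(cdf M x - cdf N x)^2 \<le> (2 + a + b) * inverse (1 + x^2)" .
    moreover have "0 \<le> (2 + a + b) * inverse (1 + x^2)"
      using order.trans[OF zero_le_power2 calculation] .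
    ultimately show "norm ((cdf M x - cdf N x)^2) \<le> norm ((2 + a + b) * inverse (1 + x^2))"
      by simp
  qed
qed

lemma sum_pmf_set: "finite (set_pmf p) \<Longrightarrow> sum (pmf p) (set_pmf p) = 1"
  by (simp add: measure_measure_pmf_finite[symmetric] measure_pmf.prob_eq_1 AE_measure_pmf)

lemma shift_step:
  fixes Q :: "real pmf" and D :: "real \<Rightarrow> real"
  assumes fin: "finite (set_pmf Q)" and Dm: "D \<in> borel_measurable borel"
    and Di: "integrable lborel (\<lambda>x. (D x)^2)"
  shows "integrable lborel (\<lambda>x. (\<Sum>r\<in>set_pmf Q. pmf Q r * D (x - (r - g)))^2)"
    and "(\<integral>x. (\<Sum>r\<in>set_pmf Q. pmf Q r * D (x - (r - g)))^2 \<partial>lborel) \<le> (\<integral>x. (D x)^2 \<partial>lborel)"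
proof -
  have m: "(\<lambda>x. D (x - (r - g))) \<in> borel_measurable borel" for r
    using Dm by measurable
  have i: "integrable lborel (\<lambda>x. (D (x - (r - g)))^2)" for r
  proof -
    have "integrable lborel (\<lambda>x. (D (g - r + 1 * x))^2)"
      by (rule lborel_integrable_real_affine[OF Di]) simp
    moreover have "(\<lambda>x. (D (g - r + 1 * x))^2) = (\<lambda>x. (D (x - (r - g)))^2)"
      by (simp add: algebra_simps)
    ultimately show ?thesis by simp
  qed
  have e: "(\<integral>x. (D (x - (r - g)))^2 \<partial>lborel) = (\<integral>x. (D x)^2 \<partial>lborel)" for r
  proof -
    have "(\<integral>x. (D x)^2 \<partial>lborel) = \<bar>1\<bar> *\<^sub>R (\<integral>x. (D (g - r + 1 * x))^2 \<partial>lborel)"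
      by (rule lborel_integral_real_affine) simp
    moreover have "(\<lambda>x. (D (g - r + 1 * x))^2) = (\<lambda>x. (D (x - (r - g)))^2)"
      by (simp add: algebra_simps)
    ultimately show ?thesis by simp
  qed
  show "integrable lborel (\<lambda>x. (\<Sum>r\<in>set_pmf Q. pmf Q r * D (x - (r - g)))^2)"
    by (rule integral_jensen(1)[where f="\<lambda>r x. D (x - (r - g))"]) (auto simp: fin sum_pmf_set m i)
  have "(\<integral>x. (\<Sum>r\<in>set_pmf Q. pmf Q r * D (x - (r - g)))^2 \<partial>lborel)
      \<le> (\<Sum>r\<in>set_pmf Q. pmf Q r * (\<integral>x. (D (x - (r - g)))^2 \<partial>lborel))"
    by (rule integral_jensen(2)[where f="\<lambda>r x. D (x - (r - g))"]) (auto simp: fin sum_pmf_set m i)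
  also have "\<dots> = (\<integral>x. (D x)^2 \<partial>lborel)"
    by (simp add: e sum_distrib_right[symmetric] sum_pmf_set fin)
  finally show "(\<integral>x. (\<Sum>r\<in>set_pmf Q. pmf Q r * D (x - (r - g)))^2 \<partial>lborel) \<le> (\<integral>x. (D x)^2 \<partial>lborel)" .
qed

theorem lemma3:
  fixes P :: "'s::finite \<Rightarrow> 's \<Rightarrow> real"
    and R :: "'s \<Rightarrow> 's \<Rightarrow> real pmf"
    and g :: real
    and \<eta> \<zeta> :: "'s \<Rightarrow> real measure"
  assumes P_nonneg: "\<And>i j. P i j \<ge> 0"
    and P_stoch: "\<And>i. (\<Sum>j\<in>UNIV. P i j) = 1"
    and R_fin: "\<And>i j. finite (set_pmf (R i j))"
    and R_range: "\<And>i j. set_pmf (R i j) \<subseteq> {0..1}"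
    and \<eta>: "\<And>i. law2 (\<eta> i)"
    and \<zeta>: "\<And>i. law2 (\<zeta> i)"
  shows "cramer_inf (bellman P R g \<eta>) (bellman P R g \<zeta>) \<le> cramer_inf \<eta> \<zeta>"
proof -
  define c where "c = cramer_inf \<eta> \<zeta>"
  define D where "D j x = cdf (\<eta> j) x - cdf (\<zeta> j) x" for j x
  define H where "H i j x = (\<Sum>r\<in>set_pmf (R i j). pmf (R i j) r * D j (x - (r - g)))" for i j x
  have cj: "cramer (\<eta> j) (\<zeta> j) \<le> c" for j
    unfolding c_def cramer_inf_def by (rule Max_ge) auto
  have cn: "0 \<le> cramer M N" for M N
    unfolding cramer_def by (intro real_sqrt_ge_zero integral_nonneg_AE) auto
  have c0: "0 \<le> c" using cj[of undefined] cn[of "\<eta> undefined" "\<zeta> undefined"] by linarith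
  have Dm: "D j \<in> borel_measurable borel" for j
    unfolding D_def using borel_measurable_mono[OF cdf_mono_gen[OF \<eta>]] borel_measurable_mono[OF cdf_mono_gen[OF \<zeta>]]
    by measurable
  have Di: "integrable lborel (\<lambda>x. (D j x)^2)" for j
    unfolding D_def by (rule cramer_sq_integrable[OF \<eta> \<zeta>])
  have DI: "(\<integral>x. (D j x)^2 \<partial>lborel) \<le> c^2" for j
  proof -
    have "(\<integral>x. (D j x)^2 \<partial>lborel) = (cramer (\<eta> j) (\<zeta> j))^2"
      unfolding cramer_def D_def by (subst real_sqrt_pow2) (auto intro!: integral_nonneg_AE)
    also have "\<dots> \<le> c^2"
      using cj[of j] cn[of "\<eta> j" "\<zeta> j"] by (intro power_mono) auto
    finally show ?thesis .
  qed
  have Hm: "H i j \<in> borel_measurable borel" for i j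
    unfolding H_def using Dm by measurable
  have Hi: "integrable lborel (\<lambda>x. (H i j x)^2)" for i j
    unfolding H_def by (rule shift_step(1)[OF R_fin Dm Di])
  have HI: "(\<integral>x. (H i j x)^2 \<partial>lborel) \<le> c^2" for i j
    unfolding H_def using shift_step(2)[OF R_fin[of i j] Dm[of j] Di[of j], where g=g] DI[of j] by linarith
  have pr: "\<And>j. prob_space (\<eta> j)" "\<And>j. prob_space (\<zeta> j)"
    and st: "\<And>j. sets (\<eta> j) = sets borel" "\<And>j. sets (\<zeta> j) = sets borel"
    using \<eta> \<zeta> by (auto simp: law2_def)
  have cdfdiff: "cdf (bellman P R g \<eta> i) x - cdf (bellman P R g \<zeta> i) x = (\<Sum>j\<in>UNIV. P i j * H i j x)" for i x
    unfolding bellman_cdf[OF P_nonneg R_fin pr(1) st(1)] bellman_cdf[OF P_nonneg R_fin pr(2) st(2)]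
      H_def D_def
    by (simp add: sum_subtractf[symmetric] right_diff_distrib[symmetric])
  have main: "cramer (bellman P R g \<eta> i) (bellman P R g \<zeta> i) \<le> c" for i
  proof -
    have "(\<integral>x. (\<Sum>j\<in>UNIV. P i j * H i j x)^2 \<partial>lborel) \<le> (\<Sum>j\<in>UNIV. P i j * (\<integral>x. (H i j x)^2 \<partial>lborel))"
      by (rule integral_jensen(2)) (auto simp: P_nonneg P_stoch Hm Hi)
    also have "\<dots> \<le> (\<Sum>j\<in>UNIV. P i j * c^2)"
      by (intro sum_mono mult_left_mono HI P_nonneg)
    also have "\<dots> = c^2"
      by (simp add: sum_distrib_right[symmetric] P_stoch)
    finally have "(\<integral>x. (\<Sum>j\<in>UNIV. P i j * H i j x)^2 \<partial>lborel) \<le> c^2" .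
    then have "sqrt (\<integral>x. (\<Sum>j\<in>UNIV. P i j * H i j x)^2 \<partial>lborel) \<le> c"
      using c0 by (simp add: real_le_lsqrt)
    then show ?thesis unfolding cramer_def cdfdiff .
  qed
  show ?thesis
  proof -
    have "Max (range (\<lambda>i. cramer (bellman P R g \<eta> i) (bellman P R g \<zeta> i))) \<le> c"
      using main by (intro Max.boundedI) auto
    then show ?thesis by (simp add: cramer_inf_def c_def)
  qed
qed

end
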